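(* In the ladder model, the density $\rho_\infty$ of the stationary distribution of $(\Delta_n)_{n\ge0}$ satisfies (i) the integral equations $$\rho_\infty(d)=e^{d}\int_{-\infty}^{d}\rho_\infty(\delta)\,d\delta+e^{2d}\int_{d}^{\infty}\rho_\infty(\delta)e^{-\delta}\,d\delta\quad (d<0),$$ $$\rho_\infty(d)=e^{-2d}\int_{-\infty}^{d}\rho_\infty(\delta)e^{\delta}\,d\delta+e^{-d}\int_{d}^{\infty}\rho_\infty(\delta)\,d\delta\quad (d\ge0);$$ (ii) $\rho_\infty$ is even: $\rho_\infty(d)=\rho_\infty(-d)$ for all $d\in\mathbb{R}$.
   Context: Ladder model $\mathcal{G}^{\{\mathcal{X},\mathcal{Y},\mathcal{Z}\}}$: for $n\ge0$, $G_n$ has vertex set $\{0,\dots,n\}\times\{0,1\}$ and edges: for $1\le i\le n$, an edge with weight $X_i$ joining $(i-1,0)$ and $(i,0)$, an edge with weight $Y_i$ joining $(i-1,1)$ and $(i,1)$; for $0\le i\le n$, an edge with weight $Z_i$ joining $(i,0)$ and $(i,1)$. All weights are independent standard exponential random variables. Path weight = sum of edge weights. $l_n$ ($l_n'$) is the minimal weight of a path in $G_n$ from $(0,0)$ to $(n,0)$ (to $(n,1)$), and $\Delta_n=l_n'-l_n$; $(\Delta_n)$ is an ergodic Markov chain given by $\Delta_0$ standard exponential and $\Delta_n=\min\{\Delta_{n-1}+Y_n,X_n+Z_n\}-\min\{X_n,\Delta_{n-1}+Y_n+Z_n\}$, and $\rho_\infty$ is the density of its unique stationary distribution. *)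

theory Defs
  imports "HOL-Probability.Probability"
begin

definition Exp1 :: "real measure" where
  "Exp1 = density lborel (\<lambda>x. ennreal (exponential_density 1 x))"

definition ladder_step :: "real \<Rightarrow> real \<Rightarrow> real \<Rightarrow> real \<Rightarrow> real" where
  "ladder_step \<delta> x y z = min (\<delta> + y) (x + z) - min x (\<delta> + y + z)"

definition ladder_stationary :: "real measure \<Rightarrow> bool" where
  "ladder_stationary \<mu> \<longleftrightarrow> prob_space \<mu> \<and> sets \<mu> = sets borel \<and>
     distr (\<mu> \<Otimes>\<^sub>M (Exp1 \<Otimes>\<^sub>M (Exp1 \<Otimes>\<^sub>M Exp1))) borel
       (\<lambda>(\<delta>, x, y, z). ladder_step \<delta> x y z) = \<mu>"

end

theory Submission
  imports Defs "HOL-Real_Asymp.Real_Asymp"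
begin



lemma E_Icc:
  fixes c e a b :: real
  assumes c: "c \<noteq> 0" and ab: "a \<le> b"
  shows "(\<integral>\<^sup>+x. ennreal (exp (c*x+e)) * indicator {a..b} x \<partial>lborel)
         = ennreal ((exp (c*b+e) - exp (c*a+e)) / c)"
proof -
  have d: "\<And>x. ((\<lambda>x. exp (c*x+e)/c) has_real_derivative exp (c*x+e)) (at x within {a..b})"
    using c by (auto intro!: derivative_eq_intros simp: field_simps)
  have "((\<lambda>x. exp (c*x+e)) has_integral (exp (c*b+e)/c - exp (c*a+e)/c)) {a..b}"
    by (rule fundamental_theorem_of_calculus[OF ab])
       (use d in \<open>auto simp: has_real_derivative_iff_has_vector_derivative\<close>)
  then show ?thesis
    by (subst nn_integral_has_integral_lebesgue'[where I="exp (c*b+e)/c - exp (c*a+e)/c"])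
       (auto simp: diff_divide_distrib)
qed

lemma E_Ici:
  fixes c e a :: real
  assumes c: "c < 0"
  shows "(\<integral>\<^sup>+x. ennreal (exp (c*x+e)) * indicator {a..} x \<partial>lborel)
         = ennreal (- exp (c*a+e) / c)"
proof -
  have lim: "((\<lambda>x. exp (c*x+e)/c) \<longlongrightarrow> 0) at_top"
  proof -
    have "filterlim (\<lambda>x. c*x) at_bot at_top"
      by (rule filterlim_tendsto_neg_mult_at_bot[OF tendsto_const c filterlim_ident])
    then have "((\<lambda>x. exp (c*x)) \<longlongrightarrow> 0) at_top"
      using exp_at_bot filterlim_compose by blast
    then have "((\<lambda>x. exp e * exp (c*x)) \<longlongrightarrow> exp e * 0) at_top"
      by (intro tendsto_mult tendsto_const)
    then have "((\<lambda>x. exp (c*x+e)) \<longlongrightarrow> 0) at_top"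
      by (simp add: exp_add mult.commute)
    then show ?thesis using tendsto_divide_zero by blast
  qed
  have "(\<integral>\<^sup>+x. ennreal (exp (c*x+e)) * indicator {a..} x \<partial>lborel) = ennreal (0 - exp (c*a+e)/c)"
    by (rule nn_integral_FTC_atLeast[OF _ _ _ lim]) (use c in \<open>auto intro!: derivative_eq_intros simp: field_simps\<close>)
  then show ?thesis by simp
qed

lemma E_Iic:
  fixes c e b :: real
  assumes c: "0 < c"
  shows "(\<integral>\<^sup>+x. ennreal (exp (c*x+e)) * indicator {..b} x \<partial>lborel)
         = ennreal (exp (c*b+e) / c)"
proof -
  have "(\<integral>\<^sup>+x. ennreal (exp (c*x+e)) * indicator {..b} x \<partial>lborel)
      = ennreal \<bar>-1::real\<bar> * (\<integral>\<^sup>+x. ennreal (exp (c*(0 + -1*x)+e)) * indicator {..b} (0 + -1*x) \<partial>lborel)"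
    by (rule nn_integral_real_affine) auto
  also have "\<dots> = (\<integral>\<^sup>+x. ennreal (exp ((-c)*x+e)) * indicator {-b..} x \<partial>lborel)"
    by (auto intro!: nn_integral_cong simp: indicator_def)
  also have "\<dots> = ennreal (- exp ((-c)*(-b)+e) / (-c))"
    using c by (intro E_Ici) auto
  finally show ?thesis by simp
qed

lemma nn_ind_cong:
  fixes S T :: "real set"
  assumes "S - {a, b} = T - {a, b}"
  shows "(\<integral>\<^sup>+x. f x * indicator S x \<partial>lborel) = (\<integral>\<^sup>+x. f x * indicator T x \<partial>lborel)"
proof (rule nn_integral_cong_AE)
  have "AE x in lborel. x \<noteq> a" "AE x in lborel. x \<noteq> b" by (rule AE_lborel_singleton)+
  then show "AE x in lborel. f x * indicator S x = f x * indicator T x"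
  proof eventually_elim
    case (elim x)
    then have "x \<in> S \<longleftrightarrow> x \<in> T" using assms by blast
    then show ?case by (simp add: indicator_def)
  qed
qed

lemma P_Icc:
  fixes c e a b :: real
  assumes "c \<noteq> 0" "a \<le> b" "S - {a, b} = {a..b} - {a, b}"
  shows "(\<integral>\<^sup>+x. ennreal (exp (c*x+e)) * indicator S x \<partial>lborel)
         = ennreal ((exp (c*b+e) - exp (c*a+e)) / c)"
  using nn_ind_cong[OF assms(3)] E_Icc[OF assms(1,2)] by simp

lemma P_Ici:
  fixes c e a :: real
  assumes "c < 0" "S - {a, a} = {a..} - {a, a}"
  shows "(\<integral>\<^sup>+x. ennreal (exp (c*x+e)) * indicator S x \<partial>lborel)
         = ennreal (- exp (c*a+e) / c)"
  using nn_ind_cong[OF assms(2)] E_Ici[OF assms(1)] by simp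

lemma P_Iic:
  fixes c e b :: real
  assumes "0 < c" "S - {b, b} = {..b} - {b, b}"
  shows "(\<integral>\<^sup>+x. ennreal (exp (c*x+e)) * indicator S x \<partial>lborel)
         = ennreal (exp (c*b+e) / c)"
  using nn_ind_cong[OF assms(2)] E_Iic[OF assms(1)] by simp


lemma half_enn: "0 \<le> x \<Longrightarrow> ennreal (x / 2) = inverse 2 * ennreal x"
proof -
  assume "0 \<le> x"
  then have "ennreal (x / 2) = ennreal x / ennreal 2" by (rule divide_ennreal[symmetric]) simp
  then show ?thesis by (simp add: divide_ennreal_def mult.commute)
qed

lemma enn_lin: "0\<le>a \<Longrightarrow> 0\<le>b \<Longrightarrow> 0\<le>c \<Longrightarrow> ennreal a * (ennreal b + ennreal c) = ennreal (a*(b+c))"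
  by (simp add: ennreal_mult ennreal_plus)

definition Phi :: "real \<Rightarrow> real" where
  "Phi s = (if 0 \<le> s then 1 - exp (-s) / 2 else exp s / 2)"

definition fL :: "real \<Rightarrow> real" where
  "fL l = exp (- \<bar>l\<bar>) / 2"

lemma Phi_nonneg: "0 \<le> Phi s"
proof (cases "0 \<le> s")
  case True
  then have "exp (-s) \<le> 1" by simp
  then have "0 \<le> 1 - exp (-s) / 2" by linarith
  then show ?thesis using True by (simp add: Phi_def)
next
  case False
  then show ?thesis by (simp add: Phi_def)
qed

lemma Phi_int: "(\<integral>\<^sup>+l. ennreal (fL l) * indicator {..s} l \<partial>lborel) = ennreal (Phi s)"
proof (cases "0 \<le> s")
  case True
  have "(\<integral>\<^sup>+l. ennreal (fL l) * indicator {..s} l \<partial>lborel) =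
     (\<integral>\<^sup>+l. ennreal (1/2) * (ennreal (exp (1*l+0)) * indicator {..<0} l
        + ennreal (exp ((-1)*l+0)) * indicator {0..s} l) \<partial>lborel)"
    using True by (intro nn_integral_cong) (auto simp: fL_def indicator_def half_enn)
  also have "\<dots> = ennreal (1/2) * ((\<integral>\<^sup>+l. ennreal (exp (1*l+0)) * indicator {..<0} l \<partial>lborel)
        + (\<integral>\<^sup>+l. ennreal (exp ((-1)*l+0)) * indicator {0..s} l \<partial>lborel))"
    by (simp add: nn_integral_cmult nn_integral_add)
  also have "\<dots> = ennreal (1/2) * (ennreal 1 + ennreal (1 - exp (-s)))"
  proof -
    have "(\<integral>\<^sup>+l. ennreal (exp (1*l+0)) * indicator {..<0} l \<partial>lborel) = ennreal (exp (1*0+0) / 1)"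
      by (rule P_Iic) auto
    moreover have "(\<integral>\<^sup>+l. ennreal (exp ((-1)*l+0)) * indicator {0..s} l \<partial>lborel)
        = ennreal ((exp ((-1) * s + 0) - exp ((-1)*0+0)) / (-1))"
      using True by (intro P_Icc) auto
    ultimately show ?thesis by simp
  qed
  also have "\<dots> = ennreal (Phi s)"
    using True by (subst enn_lin) (auto simp: Phi_def field_simps)
  finally show ?thesis .
next
  case False
  have "(\<integral>\<^sup>+l. ennreal (fL l) * indicator {..s} l \<partial>lborel) =
     (\<integral>\<^sup>+l. ennreal (1/2) * (ennreal (exp (1*l+0)) * indicator {..s} l) \<partial>lborel)"
    using False by (intro nn_integral_cong) (auto simp: fL_def indicator_def half_enn)
  also have "\<dots> = ennreal (1/2) * ennreal (exp (1 * s + 0) / 1)"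
    using E_Iic[of 1 0 s] by (simp add: nn_integral_cmult)
  also have "\<dots> = ennreal (Phi s)"
    using False by (simp add: Phi_def half_enn)
  finally show ?thesis .
qed

lemma step_clamp: "0 \<le> z \<Longrightarrow> ladder_step d x y z = max (-z) (min (d+y-x) z)"
  by (auto simp: ladder_step_def min_def max_def)

lemma Exp1_nn: "(\<integral>\<^sup>+x. g x \<partial>Exp1) = (\<integral>\<^sup>+x. ennreal (exponential_density 1 x) * g x \<partial>lborel)"
  if [measurable]: "g \<in> borel_measurable borel"
  unfolding Exp1_def by (subst nn_integral_density) auto

lemma prob_Exp1: "prob_space Exp1"
  unfolding Exp1_def using prob_space_exponential_density[of 1] by simp

lemma sets_Exp1[simp, measurable_cong]: "sets Exp1 = sets borel"
  unfolding Exp1_def by simp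

definition aa :: "real \<Rightarrow> real" where "aa t = (if 0 \<le> t then 1 - exp (-t) else 0)"

definition CC :: "real \<Rightarrow> real \<Rightarrow> real" where
  "CC d t = aa t + exp (- \<bar>t\<bar>) * Phi (t - d)"

lemma inner_z:
  "emeasure Exp1 {z. ladder_step d x y z \<le> t}
     = ennreal (aa t + exp (- \<bar>t\<bar>) * (if d+y-x \<le> t then 1 else 0))"
proof -
  have meas: "{z. ladder_step d x y z \<le> t} \<in> sets borel"
    unfolding ladder_step_def by measurable
  have "emeasure Exp1 {z. ladder_step d x y z \<le> t}
     = (\<integral>\<^sup>+z. ennreal (exponential_density 1 z) * indicator {z. ladder_step d x y z \<le> t} z \<partial>lborel)"
    unfolding Exp1_def using meas by (subst emeasure_density) auto
  also have "\<dots> = ennreal (aa t + exp (- \<bar>t\<bar>) * (if d+y-x \<le> t then 1 else 0))"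
  proof (cases "d+y-x \<le> t")
    case True
    have "(\<integral>\<^sup>+z. ennreal (exponential_density 1 z) * indicator {z. ladder_step d x y z \<le> t} z \<partial>lborel)
       = (\<integral>\<^sup>+z. ennreal (exp ((-1)*z+0)) * indicator {max 0 (-t)..} z \<partial>lborel)"
      using True by (intro nn_integral_cong) (auto simp: exponential_density_def indicator_def step_clamp)
    also have "\<dots> = ennreal (- exp ((-1)*(max 0 (-t))+0) / (-1))"
      by (rule P_Ici) auto
    also have "\<dots> = ennreal (aa t + exp (- \<bar>t\<bar>) * (if d+y-x \<le> t then 1 else 0))"
      using True by (auto simp: aa_def max_def abs_if simp del: ennreal_plus)
    finally show ?thesis .
  next
    case False
    show ?thesis
    proof (cases "0 \<le> t")
      case True
      have "(\<integral>\<^sup>+z. ennreal (exponential_density 1 z) * indicator {z. ladder_step d x y z \<le> t} z \<partial>lborel)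
         = (\<integral>\<^sup>+z. ennreal (exp ((-1)*z+0)) * indicator {0..t} z \<partial>lborel)"
        using True False by (intro nn_integral_cong) (auto simp: exponential_density_def indicator_def step_clamp)
      also have "\<dots> = ennreal ((exp ((-1)*t+0) - exp ((-1)*0+0)) / (-1))"
        using True by (intro P_Icc) auto
      also have "\<dots> = ennreal (aa t + exp (- \<bar>t\<bar>) * (if d+y-x \<le> t then 1 else 0))"
        using True False by (auto simp: aa_def simp del: ennreal_plus)
      finally show ?thesis .
    next
      case f2: False
      have "(\<lambda>z. ennreal (exponential_density 1 z) * indicator {z. ladder_step d x y z \<le> t} z) = (\<lambda>z. 0)"
        using f2 False by (intro ext) (auto simp: exponential_density_def indicator_def step_clamp)
      then show ?thesis using f2 False by (simp add: aa_def)
    qed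
  qed
  finally show ?thesis .
qed

lemma Exp1_Iic: "emeasure Exp1 {..c} = ennreal (if 0 \<le> c then 1 - exp (-c) else 0)"
proof -
  have "emeasure Exp1 {..c} = (\<integral>\<^sup>+z. ennreal (exponential_density 1 z) * indicator {..c} z \<partial>lborel)"
    unfolding Exp1_def by (subst emeasure_density) auto
  also have "\<dots> = ennreal (if 0 \<le> c then 1 - exp (-c) else 0)"
  proof (cases "0 \<le> c")
    case True
    have "(\<integral>\<^sup>+z. ennreal (exponential_density 1 z) * indicator {..c} z \<partial>lborel)
       = (\<integral>\<^sup>+z. ennreal (exp ((-1)*z+0)) * indicator {0..c} z \<partial>lborel)"
      by (intro nn_integral_cong) (auto simp: exponential_density_def indicator_def)
    also have "\<dots> = ennreal ((exp ((-1)*c+0) - exp ((-1)*0+0)) / (-1))"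
      using True by (intro P_Icc) auto
    finally show ?thesis using True by simp
  next
    case False
    have "(\<lambda>z. ennreal (exponential_density 1 z) * indicator {..c} z) = (\<lambda>z. 0)"
      using False by (intro ext) (auto simp: exponential_density_def indicator_def)
    then show ?thesis using False by simp
  qed
  finally show ?thesis .
qed

lemma Phi_Exp: "(\<integral>\<^sup>+x. ennreal (if 0 \<le> s + x then 1 - exp (-(s+x)) else 0) \<partial>Exp1) = ennreal (Phi s)"
proof -
  define c where "c = max 0 (-s)"
  have "(\<integral>\<^sup>+x. ennreal (if 0 \<le> s + x then 1 - exp (-(s+x)) else 0) \<partial>Exp1)
     = (\<integral>\<^sup>+x. ennreal (exponential_density 1 x) * ennreal (if 0 \<le> s + x then 1 - exp (-(s+x)) else 0) \<partial>lborel)"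
    by (rule Exp1_nn) measurable
  also have "\<dots> = (\<integral>\<^sup>+x. ennreal (exp (-x) - exp (-s-2*x)) * indicator {c..} x \<partial>lborel)"
  proof (intro nn_integral_cong)
    fix x :: real
    show "ennreal (exponential_density 1 x) * ennreal (if 0 \<le> s + x then 1 - exp (-(s+x)) else 0) =
          ennreal (exp (-x) - exp (-s-2*x)) * indicator {c..} x"
    proof (cases "c \<le> x")
      case True
      then have "0 \<le> x" "0 \<le> s + x" by (auto simp: c_def)
      moreover have "exp (-x) * (1 - exp (-(s+x))) = exp (-x) - exp (-s-2*x)"
        by (simp add: algebra_simps flip: exp_add)
      ultimately show ?thesis using True
        by (simp add: exponential_density_def ennreal_mult[symmetric])
    next
      case False
      then show ?thesis by (auto simp: c_def exponential_density_def)
    qed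
  qed
  also have "\<dots> = ennreal (0 - (- exp (-c) + exp (-s-2*c)/2))"
  proof (rule nn_integral_FTC_atLeast)
    show "((\<lambda>x. - exp (-x) + exp (-s-2*x)/2) \<longlongrightarrow> 0) at_top"
      by real_asymp
    fix x assume "c \<le> x"
    then have "-s-2*x \<le> -x" by (auto simp: c_def)
    then show "0 \<le> exp (-x) - exp (-s-2*x)" by simp
    show "((\<lambda>x. - exp (-x) + exp (-s-2*x)/2) has_real_derivative exp (-x) - exp (-s-2*x)) (at x)"
      by (auto intro!: derivative_eq_intros)
  qed measurable
  also have "\<dots> = ennreal (Phi s)"
  proof (cases "0 \<le> s")
    case True then show ?thesis by (simp add: c_def Phi_def)
  next
    case False
    then have cs: "c = -s" by (simp add: c_def)
    have "-s-2*c = s" by (simp add: cs)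
    then show ?thesis using False by (simp add: Phi_def cs)
  qed
  finally show ?thesis .
qed

lemma aa_nonneg: "0 \<le> aa t" by (simp add: aa_def)

lemma Exp1_const: "(\<integral>\<^sup>+x. c \<partial>Exp1) = c"
proof -
  interpret prob_space Exp1 by (rule prob_Exp1)
  show ?thesis by (simp add: emeasure_space_1)
qed

lemma space_Exp1[simp]: "space Exp1 = UNIV"
  unfolding Exp1_def by simp

lemma Exp1_UNIV[simp]: "emeasure Exp1 UNIV = 1"
  using prob_space.emeasure_space_1[OF prob_Exp1] by simp

lemma CC_Exp:
  "(\<integral>\<^sup>+x. \<integral>\<^sup>+y. ennreal (aa t + exp (- \<bar>t\<bar>) * (if d+y-x \<le> t then 1 else 0)) \<partial>Exp1 \<partial>Exp1)
    = ennreal (CC d t)"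
proof -
  have inner: "(\<integral>\<^sup>+y. ennreal (aa t + exp (- \<bar>t\<bar>) * (if d+y-x \<le> t then 1 else 0)) \<partial>Exp1)
     = ennreal (aa t) + ennreal (exp (- \<bar>t\<bar>)) * ennreal (if 0 \<le> (t-d) + x then 1 - exp (-((t-d)+x)) else 0)"
    for x
  proof -
    have "(\<integral>\<^sup>+y. ennreal (aa t + exp (- \<bar>t\<bar>) * (if d+y-x \<le> t then 1 else 0)) \<partial>Exp1)
       = (\<integral>\<^sup>+y. ennreal (aa t) + ennreal (exp (- \<bar>t\<bar>)) * indicator {..(t-d)+x} y \<partial>Exp1)"
      using aa_nonneg[of t] by (intro nn_integral_cong) (auto simp: indicator_def)
    also have "\<dots> = ennreal (aa t) + ennreal (exp (- \<bar>t\<bar>)) * emeasure Exp1 {..(t-d)+x}"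
      by (simp add: nn_integral_add nn_integral_cmult Exp1_const)
    finally show ?thesis by (simp only: Exp1_Iic)
  qed
  have "(\<integral>\<^sup>+x. \<integral>\<^sup>+y. ennreal (aa t + exp (- \<bar>t\<bar>) * (if d+y-x \<le> t then 1 else 0)) \<partial>Exp1 \<partial>Exp1)
    = (\<integral>\<^sup>+x. ennreal (aa t) + ennreal (exp (- \<bar>t\<bar>)) * ennreal (if 0 \<le> (t-d) + x then 1 - exp (-((t-d)+x)) else 0) \<partial>Exp1)"
    by (simp only: inner)
  also have "\<dots> = ennreal (aa t) + ennreal (exp (- \<bar>t\<bar>)) * (\<integral>\<^sup>+x. ennreal (if 0 \<le> (t-d) + x then 1 - exp (-((t-d)+x)) else 0) \<partial>Exp1)"
    by (simp add: nn_integral_add nn_integral_cmult Exp1_const del: ennreal_plus)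
  also have "\<dots> = ennreal (aa t) + ennreal (exp (- \<bar>t\<bar>)) * ennreal (Phi (t-d))"
    by (simp only: Phi_Exp)
  also have "\<dots> = ennreal (CC d t)"
    using aa_nonneg[of t] Phi_nonneg[of "t-d"] unfolding CC_def
    by (simp add: ennreal_mult ennreal_plus)
  finally show ?thesis .
qed

lemma set_le_meas:
  assumes "g \<in> borel_measurable N" "space N = UNIV"
  shows "{w. g w \<le> (t::real)} \<in> sets N"
proof -
  have "{w. g w \<le> t} = g -` {..t} \<inter> space N" using assms(2) by auto
  then show ?thesis using measurable_sets[OF assms(1), of "{..t}"] by simp
qed

lemma prob_EE: "prob_space (Exp1 \<Otimes>\<^sub>M Exp1)"
  by (intro prob_space_pair prob_Exp1)

lemma prob_EEE: "prob_space (Exp1 \<Otimes>\<^sub>M (Exp1 \<Otimes>\<^sub>M Exp1))"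
  by (intro prob_space_pair prob_Exp1 prob_EE)

lemma emeasure_P3:
  "emeasure (Exp1 \<Otimes>\<^sub>M (Exp1 \<Otimes>\<^sub>M Exp1)) {w. ladder_step d (fst w) (fst (snd w)) (snd (snd w)) \<le> t}
   = ennreal (CC d t)"
proof -
  interpret EE: sigma_finite_measure "Exp1 \<Otimes>\<^sub>M Exp1"
    using prob_EE by (simp add: prob_space_imp_sigma_finite)
  interpret E: sigma_finite_measure Exp1
    using prob_Exp1 by (simp add: prob_space_imp_sigma_finite)
  have "emeasure (Exp1 \<Otimes>\<^sub>M (Exp1 \<Otimes>\<^sub>M Exp1)) {w. ladder_step d (fst w) (fst (snd w)) (snd (snd w)) \<le> t}
     = (\<integral>\<^sup>+x. emeasure (Exp1 \<Otimes>\<^sub>M Exp1) (Pair x -` {w. ladder_step d (fst w) (fst (snd w)) (snd (snd w)) \<le> t}) \<partial>Exp1)"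
    by (rule EE.emeasure_pair_measure_alt, rule set_le_meas) (unfold ladder_step_def, measurable, simp add: space_pair_measure)
  also have "\<dots> = (\<integral>\<^sup>+x. \<integral>\<^sup>+y. emeasure Exp1 {z. ladder_step d x y z \<le> t} \<partial>Exp1 \<partial>Exp1)"
  proof (intro nn_integral_cong)
    fix x
    have "emeasure (Exp1 \<Otimes>\<^sub>M Exp1) (Pair x -` {w. ladder_step d (fst w) (fst (snd w)) (snd (snd w)) \<le> t})
       = emeasure (Exp1 \<Otimes>\<^sub>M Exp1) {v. ladder_step d x (fst v) (snd v) \<le> t}"
      by (auto intro!: arg_cong[where f="emeasure _"])
    also have "\<dots> = (\<integral>\<^sup>+y. emeasure Exp1 (Pair y -` {v. ladder_step d x (fst v) (snd v) \<le> t}) \<partial>Exp1)"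
      by (rule E.emeasure_pair_measure_alt, rule set_le_meas) (unfold ladder_step_def, measurable, simp add: space_pair_measure)
    also have "\<dots> = (\<integral>\<^sup>+y. emeasure Exp1 {z. ladder_step d x y z \<le> t} \<partial>Exp1)"
      by (auto intro!: nn_integral_cong arg_cong[where f="emeasure _"])
    finally show "emeasure (Exp1 \<Otimes>\<^sub>M Exp1) (Pair x -` {w. ladder_step d (fst w) (fst (snd w)) (snd (snd w)) \<le> t})
       = (\<integral>\<^sup>+y. emeasure Exp1 {z. ladder_step d x y z \<le> t} \<partial>Exp1)" .
  qed
  also have "\<dots> = ennreal (CC d t)"
    by (simp only: inner_z CC_Exp)
  finally show ?thesis .
qed

lemma fixed_point:
  assumes st: "ladder_stationary M"
  shows "emeasure M {..t} = (\<integral>\<^sup>+d. ennreal (CC d t) \<partial>M)"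
proof -
  have P: "prob_space M" and S[measurable_cong]: "sets M = sets borel"
    and D: "distr (M \<Otimes>\<^sub>M (Exp1 \<Otimes>\<^sub>M (Exp1 \<Otimes>\<^sub>M Exp1))) borel
       (\<lambda>(\<delta>, x, y, z). ladder_step \<delta> x y z) = M"
    using st unfolding ladder_stationary_def by auto
  interpret P3: sigma_finite_measure "Exp1 \<Otimes>\<^sub>M (Exp1 \<Otimes>\<^sub>M Exp1)"
    using prob_EEE by (simp add: prob_space_imp_sigma_finite)
  have sp: "space M = UNIV" using sets_eq_imp_space_eq[OF S] by simp
  have f: "(\<lambda>(\<delta>, x, y, z). ladder_step \<delta> x y z) \<in> borel_measurable (M \<Otimes>\<^sub>M (Exp1 \<Otimes>\<^sub>M (Exp1 \<Otimes>\<^sub>M Exp1)))"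
    unfolding ladder_step_def by measurable
  have "emeasure M {..t} = emeasure (distr (M \<Otimes>\<^sub>M (Exp1 \<Otimes>\<^sub>M (Exp1 \<Otimes>\<^sub>M Exp1))) borel
       (\<lambda>(\<delta>, x, y, z). ladder_step \<delta> x y z)) {..t}"
    by (simp add: D)
  also have "\<dots> = emeasure (M \<Otimes>\<^sub>M (Exp1 \<Otimes>\<^sub>M (Exp1 \<Otimes>\<^sub>M Exp1)))
      ((\<lambda>(\<delta>, x, y, z). ladder_step \<delta> x y z) -` {..t} \<inter> space (M \<Otimes>\<^sub>M (Exp1 \<Otimes>\<^sub>M (Exp1 \<Otimes>\<^sub>M Exp1))))"
    by (rule emeasure_distr[OF f]) simp
  also have "\<dots> = (\<integral>\<^sup>+d. emeasure (Exp1 \<Otimes>\<^sub>M (Exp1 \<Otimes>\<^sub>M Exp1)) (Pair d -`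
      ((\<lambda>(\<delta>, x, y, z). ladder_step \<delta> x y z) -` {..t} \<inter> space (M \<Otimes>\<^sub>M (Exp1 \<Otimes>\<^sub>M (Exp1 \<Otimes>\<^sub>M Exp1))))) \<partial>M)"
    by (rule P3.emeasure_pair_measure_alt) (use f in measurable)
  also have "\<dots> = (\<integral>\<^sup>+d. emeasure (Exp1 \<Otimes>\<^sub>M (Exp1 \<Otimes>\<^sub>M Exp1)) {w. ladder_step d (fst w) (fst (snd w)) (snd (snd w)) \<le> t} \<partial>M)"
    by (auto intro!: nn_integral_cong arg_cong[where f="emeasure _"] simp: space_pair_measure sp)
  also have "\<dots> = (\<integral>\<^sup>+d. ennreal (CC d t) \<partial>M)"
    by (simp only: emeasure_P3)
  finally show ?thesis .
qed



definition kk :: "real \<Rightarrow> real \<Rightarrow> real" where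
  "kk d x = (if 0 \<le> x then (if d \<le> x then exp (d - 2*x) else exp (-x))
                      else (if d \<le> x then exp x else exp (2*x - d)))"

lemma sum2: "0 \<le> a \<Longrightarrow> 0 \<le> b \<Longrightarrow> a + b = c \<Longrightarrow> ennreal a + ennreal b = ennreal c"
  by (simp add: ennreal_plus[symmetric] del: ennreal_plus)

lemma sum3: "0 \<le> a \<Longrightarrow> 0 \<le> b \<Longrightarrow> 0 \<le> e \<Longrightarrow> a + b + e = c \<Longrightarrow> ennreal a + ennreal b + ennreal e = ennreal c"
  by (simp add: ennreal_plus[symmetric] del: ennreal_plus)

lemma kk_cdf: "(\<integral>\<^sup>+x. ennreal (kk d x) * indicator {..t} x \<partial>lborel) = ennreal (CC d t)"
proof -
  consider (A) "t < d" "t < 0" | (B) "d \<le> t" "t < 0" | (C) "d \<le> 0" "0 \<le> t"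
    | (E) "0 \<le> t" "t < d" | (F) "0 < d" "d \<le> t" by linarith
  then show ?thesis
  proof cases
    case A
    have "(\<integral>\<^sup>+x. ennreal (kk d x) * indicator {..t} x \<partial>lborel)
        = (\<integral>\<^sup>+x. ennreal (exp (2*x+(-d))) * indicator {..t} x \<partial>lborel)"
      using A by (intro nn_integral_cong) (auto simp: kk_def indicator_def)
    also have "\<dots> = ennreal (exp (2*t+(-d)) / 2)" by (rule E_Iic) simp
    also have "\<dots> = ennreal (CC d t)"
      using A by (simp add: CC_def aa_def Phi_def exp_add[symmetric] exp_diff)
    finally show ?thesis .
  next
    case B
    have p1: "(\<integral>\<^sup>+x. ennreal (exp (2*x+(-d))) * indicator {..<d} x \<partial>lborel) = ennreal (exp (2*d+(-d)) / 2)"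
      by (rule P_Iic) auto
    have p2: "(\<integral>\<^sup>+x. ennreal (exp (1*x+0)) * indicator {d..t} x \<partial>lborel) = ennreal ((exp (1*t+0) - exp (1*d+0)) / 1)"
      using B by (intro P_Icc) auto
    have "(\<integral>\<^sup>+x. ennreal (kk d x) * indicator {..t} x \<partial>lborel)
        = (\<integral>\<^sup>+x. ennreal (exp (2*x+(-d))) * indicator {..<d} x
             + ennreal (exp (1*x+0)) * indicator {d..t} x \<partial>lborel)"
      using B by (intro nn_integral_cong) (auto simp: kk_def indicator_def)
    also have "\<dots> = (\<integral>\<^sup>+x. ennreal (exp (2*x+(-d))) * indicator {..<d} x \<partial>lborel)
             + (\<integral>\<^sup>+x. ennreal (exp (1*x+0)) * indicator {d..t} x \<partial>lborel)"
      by (rule nn_integral_add) auto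
    also have "\<dots> = ennreal (CC d t)"
      unfolding p1 p2 using B
      by (intro sum2) (simp_all add: CC_def aa_def Phi_def algebra_simps mult_exp_exp, (simp add: field_simps)?)
    finally show ?thesis .
  next
    case C
    have p1: "(\<integral>\<^sup>+x. ennreal (exp (2*x+(-d))) * indicator {..<d} x \<partial>lborel) = ennreal (exp (2*d+(-d)) / 2)"
      by (rule P_Iic) auto
    have p2: "(\<integral>\<^sup>+x. ennreal (exp (1*x+0)) * indicator {d..<0} x \<partial>lborel) = ennreal ((exp (1*0+0) - exp (1*d+0)) / 1)"
      using C by (intro P_Icc) auto
    have p3: "(\<integral>\<^sup>+x. ennreal (exp ((-2)*x+d)) * indicator {0..t} x \<partial>lborel) = ennreal ((exp ((-2)*t+d) - exp ((-2)*0+d)) / (-2))"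
      using C by (intro P_Icc) auto
    have "(\<integral>\<^sup>+x. ennreal (kk d x) * indicator {..t} x \<partial>lborel)
        = (\<integral>\<^sup>+x. ennreal (exp (2*x+(-d))) * indicator {..<d} x
             + ennreal (exp (1*x+0)) * indicator {d..<0} x
             + ennreal (exp ((-2)*x+d)) * indicator {0..t} x \<partial>lborel)"
      using C by (intro nn_integral_cong) (auto simp: kk_def indicator_def)
    also have "\<dots> = (\<integral>\<^sup>+x. ennreal (exp (2*x+(-d))) * indicator {..<d} x \<partial>lborel)
             + (\<integral>\<^sup>+x. ennreal (exp (1*x+0)) * indicator {d..<0} x \<partial>lborel)
             + (\<integral>\<^sup>+x. ennreal (exp ((-2)*x+d)) * indicator {0..t} x \<partial>lborel)"
      by (subst nn_integral_add, simp, simp, subst nn_integral_add, simp_all)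
    also have "\<dots> = ennreal (CC d t)"
      unfolding p1 p2 p3 using C
      by (intro sum3) (simp_all add: CC_def aa_def Phi_def algebra_simps mult_exp_exp, (simp add: field_simps)?)
    finally show ?thesis .
  next
    case E
    have p1: "(\<integral>\<^sup>+x. ennreal (exp (2*x+(-d))) * indicator {..<0} x \<partial>lborel) = ennreal (exp (2*0+(-d)) / 2)"
      by (rule P_Iic) auto
    have p2: "(\<integral>\<^sup>+x. ennreal (exp ((-1)*x+0)) * indicator {0..t} x \<partial>lborel) = ennreal ((exp ((-1)*t+0) - exp ((-1)*0+0)) / (-1))"
      using E by (intro P_Icc) auto
    have "(\<integral>\<^sup>+x. ennreal (kk d x) * indicator {..t} x \<partial>lborel)
        = (\<integral>\<^sup>+x. ennreal (exp (2*x+(-d))) * indicator {..<0} x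
             + ennreal (exp ((-1)*x+0)) * indicator {0..t} x \<partial>lborel)"
      using E by (intro nn_integral_cong) (auto simp: kk_def indicator_def)
    also have "\<dots> = (\<integral>\<^sup>+x. ennreal (exp (2*x+(-d))) * indicator {..<0} x \<partial>lborel)
             + (\<integral>\<^sup>+x. ennreal (exp ((-1)*x+0)) * indicator {0..t} x \<partial>lborel)"
      by (rule nn_integral_add) auto
    also have "\<dots> = ennreal (CC d t)"
      unfolding p1 p2 using E
      by (intro sum2) (simp_all add: CC_def aa_def Phi_def algebra_simps mult_exp_exp, (simp add: field_simps)?)
    finally show ?thesis .
  next
    case F
    have p1: "(\<integral>\<^sup>+x. ennreal (exp (2*x+(-d))) * indicator {..<0} x \<partial>lborel) = ennreal (exp (2*0+(-d)) / 2)"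
      by (rule P_Iic) auto
    have p2: "(\<integral>\<^sup>+x. ennreal (exp ((-1)*x+0)) * indicator {0..<d} x \<partial>lborel) = ennreal ((exp ((-1)*d+0) - exp ((-1)*0+0)) / (-1))"
      using F by (intro P_Icc) auto
    have p3: "(\<integral>\<^sup>+x. ennreal (exp ((-2)*x+d)) * indicator {d..t} x \<partial>lborel) = ennreal ((exp ((-2)*t+d) - exp ((-2)*d+d)) / (-2))"
      using F by (intro P_Icc) auto
    have "(\<integral>\<^sup>+x. ennreal (kk d x) * indicator {..t} x \<partial>lborel)
        = (\<integral>\<^sup>+x. ennreal (exp (2*x+(-d))) * indicator {..<0} x
             + ennreal (exp ((-1)*x+0)) * indicator {0..<d} x
             + ennreal (exp ((-2)*x+d)) * indicator {d..t} x \<partial>lborel)"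
      using F by (intro nn_integral_cong) (auto simp: kk_def indicator_def)
    also have "\<dots> = (\<integral>\<^sup>+x. ennreal (exp (2*x+(-d))) * indicator {..<0} x \<partial>lborel)
             + (\<integral>\<^sup>+x. ennreal (exp ((-1)*x+0)) * indicator {0..<d} x \<partial>lborel)
             + (\<integral>\<^sup>+x. ennreal (exp ((-2)*x+d)) * indicator {d..t} x \<partial>lborel)"
      by (subst nn_integral_add, simp, simp, subst nn_integral_add, simp_all)
    also have "\<dots> = ennreal (CC d t)"
      unfolding p1 p2 p3 using F
      by (intro sum3) (simp_all add: CC_def aa_def Phi_def algebra_simps mult_exp_exp, (simp add: field_simps)?)
    finally show ?thesis .
  qed
qed




lemma dens:
  assumes st: "ladder_stationary M"
  shows "M = density lborel (\<lambda>x. \<integral>\<^sup>+d. ennreal (kk d x) \<partial>M)"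
proof -
  have P: "prob_space M" and S[measurable_cong]: "sets M = sets borel"
    using st unfolding ladder_stationary_def by auto
  interpret M: prob_space M by (rule P)
  interpret PS: pair_sigma_finite M lborel
    by unfold_locales
  have kkm[measurable]: "(\<lambda>(d, x). kk d x) \<in> borel_measurable (borel \<Otimes>\<^sub>M borel)"
    unfolding kk_def by measurable
  have gm[measurable]: "(\<lambda>x. \<integral>\<^sup>+d. ennreal (kk d x) \<partial>M) \<in> borel_measurable borel"
  proof -
    have "(\<lambda>(x, d). ennreal (kk d x)) \<in> borel_measurable (borel \<Otimes>\<^sub>M M)"
      using kkm by measurable
    then show ?thesis by (rule M.borel_measurable_nn_integral[where f="\<lambda>x d. ennreal (kk d x)", simplified])
  qed
  show ?thesis
  proof (rule measure_eqI_generator_eq[where \<Omega>=UNIV and E="range atMost" and A="\<lambda>i. {..real i}"])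
    show "Int_stable (range atMost :: real set set)"
      by (auto simp: Int_stable_def)
    show "range atMost \<subseteq> Pow (UNIV :: real set)" by auto
    show "sets M = sigma_sets UNIV (range atMost)"
      using S borel_eq_atMost[where 'a=real] by (metis sets_measure_of top_greatest Pow_UNIV)
    show "sets (density lborel (\<lambda>x. \<integral>\<^sup>+d. ennreal (kk d x) \<partial>M)) = sigma_sets UNIV (range atMost)"
      using borel_eq_atMost[where 'a=real] by (metis sets_lborel sets_density sets_measure_of top_greatest Pow_UNIV)
    show "range (\<lambda>i. {..real i}) \<subseteq> range atMost" by auto
    show "(\<Union>i. {..real i}) = UNIV"
      by (auto intro: real_arch_simple)
    show "emeasure M {..real i} \<noteq> \<infinity>" for i by simp
    fix X assume "X \<in> range (atMost :: real \<Rightarrow> real set)"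
    then obtain t where X: "X = {..t}" by auto
    have "emeasure (density lborel (\<lambda>x. \<integral>\<^sup>+d. ennreal (kk d x) \<partial>M)) {..t}
        = (\<integral>\<^sup>+x. (\<integral>\<^sup>+d. ennreal (kk d x) \<partial>M) * indicator {..t} x \<partial>lborel)"
      by (rule emeasure_density) auto
    also have "\<dots> = (\<integral>\<^sup>+x. \<integral>\<^sup>+d. ennreal (kk d x) * indicator {..t} x \<partial>M \<partial>lborel)"
      by (simp add: nn_integral_multc)
    also have "\<dots> = (\<integral>\<^sup>+d. \<integral>\<^sup>+x. ennreal (kk d x) * indicator {..t} x \<partial>lborel \<partial>M)"
      by (rule PS.Fubini') measurable
    also have "\<dots> = (\<integral>\<^sup>+d. ennreal (CC d t) \<partial>M)"
      by (simp only: kk_cdf)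
    also have "\<dots> = emeasure M {..t}"
      by (rule fixed_point[OF st, symmetric])
    finally show "emeasure M X = emeasure (density lborel (\<lambda>x. \<integral>\<^sup>+d. ennreal (kk d x) \<partial>M)) X"
      unfolding X by simp
  qed
qed




lemma set_int_dens:
  assumes Mr: "M = density lborel (\<lambda>x. ennreal (r x))" and rm[measurable]: "r \<in> borel_measurable borel"
    and r0: "\<And>x. 0 \<le> r x" and gm[measurable]: "g \<in> borel_measurable borel" and g0: "\<And>x. 0 \<le> g x"
    and Sm[measurable]: "S \<in> sets borel"
  shows "(\<integral>\<delta>\<in>S. r \<delta> * g \<delta> \<partial>lborel) = enn2real (\<integral>\<^sup>+\<delta>. ennreal (g \<delta>) * indicator S \<delta> \<partial>M)"
proof -
  have "(\<integral>\<delta>\<in>S. r \<delta> * g \<delta> \<partial>lborel) = (\<integral>\<delta>. indicator S \<delta> * (r \<delta> * g \<delta>) \<partial>lborel)"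
    by (simp add: set_lebesgue_integral_def)
  also have "\<dots> = enn2real (\<integral>\<^sup>+\<delta>. ennreal (indicator S \<delta> * (r \<delta> * g \<delta>)) \<partial>lborel)"
    using r0 g0 by (intro integral_eq_nn_integral) auto
  also have "(\<integral>\<^sup>+\<delta>. ennreal (indicator S \<delta> * (r \<delta> * g \<delta>)) \<partial>lborel)
     = (\<integral>\<^sup>+\<delta>. ennreal (r \<delta>) * (ennreal (g \<delta>) * indicator S \<delta>) \<partial>lborel)"
    using r0 g0 by (intro nn_integral_cong) (auto simp: indicator_def ennreal_mult)
  also have "\<dots> = (\<integral>\<^sup>+\<delta>. ennreal (g \<delta>) * indicator S \<delta> \<partial>M)"
    unfolding Mr by (subst nn_integral_density) auto
  finally show ?thesis .
qed

lemma kk_nonneg: "0 \<le> kk d x" by (simp add: kk_def)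

lemma eqs:
  assumes Mr: "M = density lborel (\<lambda>x. ennreal (r x))" and rm[measurable]: "r \<in> borel_measurable borel"
    and r0: "\<And>x. 0 \<le> r x" and P: "prob_space M"
    and rdef: "\<And>x. ennreal (r x) = (\<integral>\<^sup>+d. ennreal (kk d x) \<partial>M)"
  shows "\<forall>d < 0. r d = exp d * (\<integral>\<delta>\<in>{..d}. r \<delta> \<partial>lborel)
                          + exp (2 * d) * (\<integral>\<delta>\<in>{d..}. r \<delta> * exp (- \<delta>) \<partial>lborel)"
    and "\<forall>d \<ge> 0. r d = exp (- 2 * d) * (\<integral>\<delta>\<in>{..d}. r \<delta> * exp \<delta> \<partial>lborel)
                          + exp (- d) * (\<integral>\<delta>\<in>{d..}. r \<delta> \<partial>lborel)"
proof -
  interpret M: prob_space M by (rule P)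
  have S[measurable_cong]: "sets M = sets borel" unfolding Mr by simp
  have AEx: "AE d in M. d \<noteq> x" for x
    unfolding Mr by (subst AE_density) (auto intro: AE_mp[OF AE_lborel_singleton[of x]])
  have fin: "(\<integral>\<^sup>+\<delta>. ennreal (g \<delta>) * indicator S \<delta> \<partial>M) < \<top>" if "\<And>d. g d \<le> B" "\<And>d. 0 \<le> g d" for g :: "real \<Rightarrow> real" and B S
  proof -
    have "(\<integral>\<^sup>+\<delta>. ennreal (g \<delta>) * indicator S \<delta> \<partial>M) \<le> (\<integral>\<^sup>+\<delta>. ennreal B \<partial>M)"
      using that by (intro nn_integral_mono) (auto simp: indicator_def intro: ennreal_leI)
    also have "\<dots> < \<top>" by (simp add: M.emeasure_space_1)
    finally show ?thesis .
  qed
  show "\<forall>d < 0. r d = exp d * (\<integral>\<delta>\<in>{..d}. r \<delta> \<partial>lborel)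
                          + exp (2 * d) * (\<integral>\<delta>\<in>{d..}. r \<delta> * exp (- \<delta>) \<partial>lborel)"
  proof (intro allI impI)
    fix x :: real assume x: "x < 0"
    have "ennreal (r x) = (\<integral>\<^sup>+d. ennreal (exp x) * (ennreal 1 * indicator {..x} d)
             + ennreal (exp (2*x)) * (ennreal (exp (-d)) * indicator {x..} d) \<partial>M)"
      unfolding rdef
    proof (rule nn_integral_cong_AE)
      show "AE d in M. ennreal (kk d x) = ennreal (exp x) * (ennreal 1 * indicator {..x} d)
             + ennreal (exp (2*x)) * (ennreal (exp (-d)) * indicator {x..} d)"
        using AEx[of x] 
      proof eventually_elim
        case (elim d)
        then show ?case using x
          by (auto simp: kk_def indicator_def ennreal_mult[symmetric] mult_exp_exp)
      qed
    qed
    also have "\<dots> = ennreal (exp x) * (\<integral>\<^sup>+d. ennreal 1 * indicator {..x} d \<partial>M)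
             + ennreal (exp (2*x)) * (\<integral>\<^sup>+d. ennreal (exp (-d)) * indicator {x..} d \<partial>M)"
      by (simp add: nn_integral_add nn_integral_cmult)
    finally have e: "ennreal (r x) = \<dots>" .
    have f1: "(\<integral>\<^sup>+d. ennreal 1 * indicator {..x} d \<partial>M) < \<top>"
      by (rule fin[of "\<lambda>_. 1" 1]) auto
    have f2: "(\<integral>\<^sup>+d. ennreal (exp (-d)) * indicator {x..} d \<partial>M) < \<top>"
    proof -
      have "(\<integral>\<^sup>+d. ennreal (exp (-d)) * indicator {x..} d \<partial>M) = (\<integral>\<^sup>+d. ennreal (min (exp (-d)) (exp (-x))) * indicator {x..} d \<partial>M)"
        by (intro nn_integral_cong) (auto simp: indicator_def min_def)
      also have "\<dots> < \<top>" by (rule fin[of _ "exp (-x)"]) auto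
      finally show ?thesis .
    qed
    have "r x = enn2real (ennreal (r x))" using r0 by simp
    also have "\<dots> = exp x * enn2real (\<integral>\<^sup>+d. ennreal 1 * indicator {..x} d \<partial>M)
             + exp (2*x) * enn2real (\<integral>\<^sup>+d. ennreal (exp (-d)) * indicator {x..} d \<partial>M)"
      unfolding e using f1 f2 by (simp add: enn2real_plus enn2real_mult ennreal_mult_less_top)
    also have "\<dots> = exp x * (\<integral>\<delta>\<in>{..x}. r \<delta> * 1 \<partial>lborel) + exp (2*x) * (\<integral>\<delta>\<in>{x..}. r \<delta> * exp (- \<delta>) \<partial>lborel)"
      by (subst (1 2) set_int_dens[OF Mr]) (auto simp: r0)
    finally show "r x = exp x * (\<integral>\<delta>\<in>{..x}. r \<delta> \<partial>lborel) + exp (2 * x) * (\<integral>\<delta>\<in>{x..}. r \<delta> * exp (- \<delta>) \<partial>lborel)"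
      by simp
  qed
  show "\<forall>d \<ge> 0. r d = exp (- 2 * d) * (\<integral>\<delta>\<in>{..d}. r \<delta> * exp \<delta> \<partial>lborel)
                          + exp (- d) * (\<integral>\<delta>\<in>{d..}. r \<delta> \<partial>lborel)"
  proof (intro allI impI)
    fix x :: real assume x: "0 \<le> x"
    have "ennreal (r x) = (\<integral>\<^sup>+d. ennreal (exp (- 2 * x)) * (ennreal (exp d) * indicator {..x} d)
             + ennreal (exp (- x)) * (ennreal 1 * indicator {x..} d) \<partial>M)"
      unfolding rdef
    proof (rule nn_integral_cong_AE)
      show "AE d in M. ennreal (kk d x) = ennreal (exp (- 2 * x)) * (ennreal (exp d) * indicator {..x} d)
             + ennreal (exp (- x)) * (ennreal 1 * indicator {x..} d)"
        using AEx[of x]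
      proof eventually_elim
        case (elim d)
        then show ?case using x
          by (auto simp: kk_def indicator_def ennreal_mult[symmetric] mult_exp_exp)
      qed
    qed
    also have "\<dots> = ennreal (exp (- 2 * x)) * (\<integral>\<^sup>+d. ennreal (exp d) * indicator {..x} d \<partial>M)
             + ennreal (exp (- x)) * (\<integral>\<^sup>+d. ennreal 1 * indicator {x..} d \<partial>M)"
      by (simp add: nn_integral_add nn_integral_cmult)
    finally have e: "ennreal (r x) = \<dots>" .
    have f2: "(\<integral>\<^sup>+d. ennreal 1 * indicator {x..} d \<partial>M) < \<top>"
      by (rule fin[of "\<lambda>_. 1" 1]) auto
    have f1: "(\<integral>\<^sup>+d. ennreal (exp d) * indicator {..x} d \<partial>M) < \<top>"
    proof -
      have "(\<integral>\<^sup>+d. ennreal (exp d) * indicator {..x} d \<partial>M) = (\<integral>\<^sup>+d. ennreal (min (exp d) (exp x)) * indicator {..x} d \<partial>M)"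
        by (intro nn_integral_cong) (auto simp: indicator_def min_def)
      also have "\<dots> < \<top>" by (rule fin[of _ "exp x"]) auto
      finally show ?thesis .
    qed
    have "r x = enn2real (ennreal (r x))" using r0 by simp
    also have "\<dots> = exp (- 2 * x) * enn2real (\<integral>\<^sup>+d. ennreal (exp d) * indicator {..x} d \<partial>M)
             + exp (- x) * enn2real (\<integral>\<^sup>+d. ennreal 1 * indicator {x..} d \<partial>M)"
      unfolding e using f1 f2 by (simp add: enn2real_plus enn2real_mult ennreal_mult_less_top)
    also have "\<dots> = exp (- 2 * x) * (\<integral>\<delta>\<in>{..x}. r \<delta> * exp \<delta> \<partial>lborel) + exp (- x) * (\<integral>\<delta>\<in>{x..}. r \<delta> * 1 \<partial>lborel)"
      by (subst (1 2) set_int_dens[OF Mr]) (auto simp: r0)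
    finally show "r x = exp (- 2 * x) * (\<integral>\<delta>\<in>{..x}. r \<delta> * exp \<delta> \<partial>lborel) + exp (- x) * (\<integral>\<delta>\<in>{x..}. r \<delta> \<partial>lborel)"
      by simp
  qed
qed




lemma fL_meas[measurable]: "fL \<in> borel_measurable borel"
  unfolding fL_def by measurable

lemma fL_nonneg: "0 \<le> fL x" by (simp add: fL_def)

lemma half_two: "inverse (2::ennreal) * 2 = 1"
proof -
  have "(2::ennreal) / 2 = 1" by (rule ennreal_divide_self) auto
  then show ?thesis by (simp add: divide_ennreal_def mult.commute)
qed

lemma inv2_eq: "inverse (2::ennreal) = ennreal (inverse 2)"
proof -
  have "inverse (ennreal 2) = ennreal (inverse 2)" by (rule inverse_ennreal) simp
  then show ?thesis by (simp only: ennreal_numeral)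
qed

lemma inv2_real: "enn2real (inverse (2::ennreal)) = 1/2"
  by (subst inv2_eq, subst enn2real_ennreal) auto

lemma inv2_fin: "inverse (2::ennreal) < \<top>"
  by (subst inv2_eq) (rule ennreal_less_top)

lemma fL_nn: "(\<integral>\<^sup>+l. ennreal (fL l) \<partial>lborel) = 1"
proof -
  have "(\<integral>\<^sup>+l. ennreal (fL l) \<partial>lborel) =
     (\<integral>\<^sup>+l. inverse 2 * (ennreal (exp (1*l+0)) * indicator {..<0} l
        + ennreal (exp ((-1)*l+0)) * indicator {0..} l) \<partial>lborel)"
    by (intro nn_integral_cong) (auto simp: fL_def indicator_def half_enn)
  also have "\<dots> = inverse 2 * ((\<integral>\<^sup>+l. ennreal (exp (1*l+0)) * indicator {..<0} l \<partial>lborel)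
        + (\<integral>\<^sup>+l. ennreal (exp ((-1)*l+0)) * indicator {0..} l \<partial>lborel))"
    by (simp add: nn_integral_cmult nn_integral_add)
  also have "\<dots> = inverse 2 * (ennreal (exp (1*0+0) / 1) + ennreal (- exp ((-1)*0+0) / (-1)))"
  proof -
    have "(\<integral>\<^sup>+l. ennreal (exp (1*l+0)) * indicator {..<0} l \<partial>lborel) = ennreal (exp (1*0+0) / 1)"
      by (rule P_Iic) auto
    moreover have "(\<integral>\<^sup>+l. ennreal (exp ((-1)*l+0)) * indicator {0..} l \<partial>lborel) = ennreal (- exp ((-1)*0+0) / (-1))"
      by (rule P_Ici) auto
    ultimately show ?thesis by (simp only:)
  qed
  also have "\<dots> = 1"
    using half_two by (simp add: one_add_one)
  finally show ?thesis .
qed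

lemma fL2_nn: "(\<integral>\<^sup>+l. ennreal (fL l * exp (- \<bar>l\<bar>)) \<partial>lborel) = ennreal (1/2)"
proof -
  have "(\<integral>\<^sup>+l. ennreal (fL l * exp (- \<bar>l\<bar>)) \<partial>lborel) =
     (\<integral>\<^sup>+l. inverse 2 * (ennreal (exp (2*l+0)) * indicator {..<0} l
        + ennreal (exp ((-2)*l+0)) * indicator {0..} l) \<partial>lborel)"
    by (intro nn_integral_cong) (auto simp: fL_def indicator_def half_enn mult_exp_exp)
  also have "\<dots> = inverse 2 * ((\<integral>\<^sup>+l. ennreal (exp (2*l+0)) * indicator {..<0} l \<partial>lborel)
        + (\<integral>\<^sup>+l. ennreal (exp ((-2)*l+0)) * indicator {0..} l \<partial>lborel))"
    by (simp add: nn_integral_cmult nn_integral_add)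
  also have "\<dots> = inverse 2 * (ennreal (exp (2*0+0) / 2) + ennreal (- exp ((-2)*0+0) / (-2)))"
  proof -
    have "(\<integral>\<^sup>+l. ennreal (exp (2*l+0)) * indicator {..<0} l \<partial>lborel) = ennreal (exp (2*0+0) / 2)"
      by (rule P_Iic) auto
    moreover have "(\<integral>\<^sup>+l. ennreal (exp ((-2)*l+0)) * indicator {0..} l \<partial>lborel) = ennreal (- exp ((-2)*0+0) / (-2))"
      by (rule P_Ici) auto
    ultimately show ?thesis by (simp only:)
  qed
  also have "\<dots> = ennreal (1/2)"
  proof -
    have "ennreal (1/2) = inverse 2" using inverse_ennreal[of 2] by simp
    have h: "inverse (2::ennreal) + inverse 2 = 1" using half_two by (simp add: mult_2_right[symmetric])
    then show ?thesis by simp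
  qed
  finally show ?thesis .
qed

lemma fL_int: "integrable lborel fL"
  by (rule integrableI_bounded) (auto simp: fL_nonneg fL_nn)

lemma fL_integral: "(\<integral>l. fL l \<partial>lborel) = 1"
  by (subst integral_eq_nn_integral) (auto simp: fL_nonneg fL_nn)

lemma fL2_int: "integrable lborel (\<lambda>l. fL l * exp (- \<bar>l\<bar>))"
  by (rule integrableI_bounded) (auto simp: fL_nonneg fL2_nn inv2_fin)

lemma fL2_integral: "(\<integral>l. fL l * exp (- \<bar>l\<bar>) \<partial>lborel) = 1/2"
  by (subst integral_eq_nn_integral) (auto simp: fL_nonneg fL2_nn inv2_real)

lemma int_fL_bounded:
  assumes [measurable]: "h \<in> borel_measurable borel" and "\<And>x. \<bar>h x\<bar> \<le> B"
  shows "integrable lborel (\<lambda>l. fL l * h (t - l))"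
proof -
  have bound: "norm (fL x * h (t - x)) \<le> norm (fL x * B)" for x
  proof -
    have "\<bar>h (t - x)\<bar> \<le> \<bar>B\<bar>" using assms(2)[of "t - x"] by linarith
    then have "fL x * \<bar>h (t - x)\<bar> \<le> fL x * \<bar>B\<bar>" using fL_nonneg[of x] by (rule mult_left_mono)
    then show "norm (fL x * h (t - x)) \<le> norm (fL x * B)"
      using fL_nonneg[of x] by (simp add: abs_mult mult.commute)
  qed
  show ?thesis
    by (rule Bochner_Integration.integrable_bound[OF integrable_mult_left[OF fL_int, of B]])
       (measurable, use bound in auto)
qed

lemma contraction:
  fixes F G :: "real \<Rightarrow> real"
  assumes [measurable]: "F \<in> borel_measurable borel" "G \<in> borel_measurable borel"
    and F01: "\<And>x. 0 \<le> F x \<and> F x \<le> 1" and G01: "\<And>x. 0 \<le> G x \<and> G x \<le> 1"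
    and Feq: "\<And>t. F t = aa t + exp (- \<bar>t\<bar>) * (\<integral>l. fL l * F (t - l) \<partial>lborel)"
    and Geq: "\<And>t. G t = aa t + exp (- \<bar>t\<bar>) * (\<integral>l. fL l * G (t - l) \<partial>lborel)"
  shows "F = G"
proof -
  define D where "D x = F x - G x" for x
  have Dm[measurable]: "D \<in> borel_measurable borel" unfolding D_def by measurable
  have D1: "\<bar>D x\<bar> \<le> 1" for x using F01[of x] G01[of x] by (auto simp: D_def)
  have Deq: "D t = exp (- \<bar>t\<bar>) * (\<integral>l. fL l * D (t - l) \<partial>lborel)" for t
  proof -
    have iF: "integrable lborel (\<lambda>l. fL l * F (t - l))"
      by (rule int_fL_bounded[where B=1]) (use F01 in auto)
    have iG: "integrable lborel (\<lambda>l. fL l * G (t - l))"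
      by (rule int_fL_bounded[where B=1]) (use G01 in auto)
    have I: "(\<integral>l. fL l * (F (t - l) - G (t - l)) \<partial>lborel) = (\<integral>l. fL l * F (t - l) \<partial>lborel) - (\<integral>l. fL l * G (t - l) \<partial>lborel)"
      unfolding right_diff_distrib by (rule Bochner_Integration.integral_diff[OF iF iG])
    have "D t = exp (- \<bar>t\<bar>) * ((\<integral>l. fL l * F (t - l) \<partial>lborel) - (\<integral>l. fL l * G (t - l) \<partial>lborel))"
      using Feq[of t] Geq[of t] by (simp add: D_def algebra_simps)
    then show ?thesis using I by (simp add: D_def)
  qed
  have step: "\<bar>D t\<bar> \<le> B / 2" if B: "\<And>x. \<bar>D x\<bar> \<le> B" for B t
  proof -
    have B0: "0 \<le> B" using B[of 0] by linarith
    have iD: "integrable lborel (\<lambda>l. fL l * D (t - l))" for t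
      by (rule int_fL_bounded[where B=B]) (use B in auto)
    have s1: "\<bar>D s\<bar> \<le> B * exp (- \<bar>s\<bar>)" for s
    proof -
      have "\<bar>\<integral>l. fL l * D (s - l) \<partial>lborel\<bar> \<le> (\<integral>l. fL l * B \<partial>lborel)"
        by (rule integral_abs_bound_integral[OF iD]) (use B fL_nonneg fL_int in \<open>auto simp: abs_mult intro: mult_left_mono\<close>)
      also have "\<dots> = B" using fL_integral by simp
      finally have "\<bar>\<integral>l. fL l * D (s - l) \<partial>lborel\<bar> \<le> B" .
      then show ?thesis by (subst Deq) (simp add: abs_mult mult.commute mult_left_mono)
    qed
    have ih: "integrable lborel (\<lambda>l. fL l * (B * exp (- \<bar>t - l\<bar>)))"
      by (rule int_fL_bounded[where B=B and h="\<lambda>s. B * exp (- \<bar>s\<bar>)"]) (use B0 in \<open>auto simp: abs_mult intro: mult_left_le\<close>)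
    have "\<bar>D t\<bar> = exp (- \<bar>t\<bar>) * \<bar>\<integral>l. fL l * D (t - l) \<partial>lborel\<bar>"
      by (subst Deq) (simp add: abs_mult)
    also have "\<dots> \<le> exp (- \<bar>t\<bar>) * (\<integral>l. fL l * (B * exp (- \<bar>t - l\<bar>)) \<partial>lborel)"
      by (intro mult_left_mono integral_abs_bound_integral[OF iD ih])
         (use s1 fL_nonneg in \<open>auto simp: abs_mult intro: mult_left_mono\<close>)
    also have "\<dots> = (\<integral>l. exp (- \<bar>t\<bar>) * (fL l * (B * exp (- \<bar>t - l\<bar>))) \<partial>lborel)"
      by simp
    also have "\<dots> \<le> (\<integral>l. B * (fL l * exp (- \<bar>l\<bar>)) \<partial>lborel)"
    proof (rule integral_mono)
      show "integrable lborel (\<lambda>l. exp (- \<bar>t\<bar>) * (fL l * (B * exp (- \<bar>t - l\<bar>))))"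
        using ih by simp
      show "integrable lborel (\<lambda>l. B * (fL l * exp (- \<bar>l\<bar>)))"
        using fL2_int by simp
      fix l :: real
      have "exp (- \<bar>t\<bar>) * exp (- \<bar>t - l\<bar>) \<le> exp (- \<bar>l\<bar>)"
        by (simp add: mult_exp_exp)
      then have "B * fL l * (exp (- \<bar>t\<bar>) * exp (- \<bar>t - l\<bar>)) \<le> B * fL l * exp (- \<bar>l\<bar>)"
        using B0 fL_nonneg[of l] by (intro mult_left_mono) auto
      then show "exp (- \<bar>t\<bar>) * (fL l * (B * exp (- \<bar>t - l\<bar>))) \<le> B * (fL l * exp (- \<bar>l\<bar>))"
        by (simp add: algebra_simps)
    qed
    also have "\<dots> = B / 2" using fL2_integral by simp
    finally show ?thesis .
  qed
  have pw: "\<bar>D t\<bar> \<le> (1/2) ^ n" for n t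
  proof (induction n arbitrary: t)
    case 0 then show ?case using D1 by simp
  next
    case (Suc n) then show ?case using step[of "(1/2)^n" t] by simp
  qed
  have "D t = 0" for t
  proof (rule ccontr)
    assume "D t \<noteq> 0"
    then have "0 < \<bar>D t\<bar>" by simp
    then obtain n where "(1/2::real) ^ n < \<bar>D t\<bar>" using real_arch_pow_inv[of "\<bar>D t\<bar>" "1/2"] by auto
    then show False using pw[of t n] by simp
  qed
  then show ?thesis unfolding D_def by (intro ext) simp
qed




lemma CC_split: "ennreal (CC d t) = ennreal (aa t) + ennreal (exp (- \<bar>t\<bar>)) * ennreal (Phi (t - d))"
  using aa_nonneg[of t] Phi_nonneg[of "t-d"] unfolding CC_def
  by (simp add: ennreal_mult ennreal_plus)

lemma Phi_meas[measurable]: "Phi \<in> borel_measurable borel"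
  unfolding Phi_def by measurable

lemma Heq:
  assumes RD: "real_distribution M"
    and fp: "\<And>t. emeasure M {..t} = (\<integral>\<^sup>+d. ennreal (CC d t) \<partial>M)"
  shows "cdf M t = aa t + exp (- \<bar>t\<bar>) * (\<integral>l. fL l * cdf M (t - l) \<partial>lborel)"
proof -
  interpret real_distribution M by (rule RD)
  interpret PS: pair_sigma_finite lborel M by unfold_locales
  have cm: "cdf M \<in> borel_measurable borel"
    by (rule borel_measurable_mono) (auto simp: mono_def cdf_nondecreasing)
  have cm2[measurable]: "(\<lambda>l. cdf M (t - l)) \<in> borel_measurable borel"
    using measurable_compose[OF _ cm, of "\<lambda>l. t - l" borel] by simp
  have c01: "0 \<le> cdf M x" "cdf M x \<le> 1" for x
    using cdf_nonneg cdf_bounded_prob by auto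
  have "(\<integral>\<^sup>+d. ennreal (Phi (t - d)) \<partial>M)
      = (\<integral>\<^sup>+d. \<integral>\<^sup>+l. ennreal (fL l) * indicator {..t - d} l \<partial>lborel \<partial>M)"
    by (simp only: Phi_int)
  also have "\<dots> = (\<integral>\<^sup>+l. \<integral>\<^sup>+d. ennreal (fL l) * indicator {..t - d} l \<partial>M \<partial>lborel)"
    by (rule PS.Fubini') (unfold indicator_def atMost_iff, measurable)
  also have "\<dots> = (\<integral>\<^sup>+l. ennreal (fL l) * emeasure M {..t - l} \<partial>lborel)"
  proof (intro nn_integral_cong)
    fix l
    have "(\<integral>\<^sup>+d. ennreal (fL l) * indicator {..t - d} l \<partial>M) = (\<integral>\<^sup>+d. ennreal (fL l) * indicator {..t - l} d \<partial>M)"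
      by (intro nn_integral_cong) (auto simp: indicator_def)
    also have "\<dots> = ennreal (fL l) * emeasure M {..t - l}"
      by (rule nn_integral_cmult_indicator) simp
    finally show "(\<integral>\<^sup>+d. ennreal (fL l) * indicator {..t - d} l \<partial>M) = ennreal (fL l) * emeasure M {..t - l}" .
  qed
  also have "\<dots> = (\<integral>\<^sup>+l. ennreal (fL l * cdf M (t - l)) \<partial>lborel)"
    by (intro nn_integral_cong) (auto simp: emeasure_eq_measure cdf_def2 ennreal_mult fL_nonneg)
  finally have X: "(\<integral>\<^sup>+d. ennreal (Phi (t - d)) \<partial>M) = (\<integral>\<^sup>+l. ennreal (fL l * cdf M (t - l)) \<partial>lborel)" .
  have Xfin: "(\<integral>\<^sup>+l. ennreal (fL l * cdf M (t - l)) \<partial>lborel) < \<top>"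
  proof -
    have "(\<integral>\<^sup>+l. ennreal (fL l * cdf M (t - l)) \<partial>lborel) \<le> (\<integral>\<^sup>+l. ennreal (fL l) \<partial>lborel)"
      using c01 fL_nonneg by (intro nn_integral_mono ennreal_leI) (auto intro: mult_left_le)
    then show ?thesis using fL_nn by (simp add: top.not_eq_extremum order_le_less_trans)
  qed
  have "cdf M t = enn2real (emeasure M {..t})" by (simp add: cdf_def2 measure_def)
  also have "\<dots> = enn2real (ennreal (aa t) + ennreal (exp (- \<bar>t\<bar>)) * (\<integral>\<^sup>+d. ennreal (Phi (t - d)) \<partial>M))"
  proof -
    have "(\<integral>\<^sup>+d. ennreal (aa t) + ennreal (exp (- \<bar>t\<bar>)) * ennreal (Phi (t - d)) \<partial>M)
       = (\<integral>\<^sup>+d. ennreal (aa t) \<partial>M) + (\<integral>\<^sup>+d. ennreal (exp (- \<bar>t\<bar>)) * ennreal (Phi (t - d)) \<partial>M)"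
      by (rule nn_integral_add) auto
    also have "\<dots> = ennreal (aa t) + ennreal (exp (- \<bar>t\<bar>)) * (\<integral>\<^sup>+d. ennreal (Phi (t - d)) \<partial>M)"
      using emeasure_space_1 by (simp add: nn_integral_cmult)
    finally show ?thesis unfolding fp CC_split by simp
  qed
  also have "\<dots> = aa t + exp (- \<bar>t\<bar>) * enn2real (\<integral>\<^sup>+l. ennreal (fL l * cdf M (t - l)) \<partial>lborel)"
    unfolding X using Xfin aa_nonneg[of t]
    by (simp add: enn2real_plus enn2real_mult ennreal_mult_less_top del: ennreal_plus)
  also have "enn2real (\<integral>\<^sup>+l. ennreal (fL l * cdf M (t - l)) \<partial>lborel) = (\<integral>l. fL l * cdf M (t - l) \<partial>lborel)"
    using c01 fL_nonneg by (subst integral_eq_nn_integral) auto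
  finally show ?thesis .
qed




lemma Phi_le1: "Phi s \<le> 1"
proof (cases "0 \<le> s")
  case False
  then have "exp s \<le> 1" by simp
  then have "exp s / 2 \<le> 1" by linarith
  then show ?thesis using False by (simp add: Phi_def)
qed (simp add: Phi_def)

lemma Phi_sym: "Phi s + Phi (-s) = 1"
  by (cases "s > 0"; cases "s = 0") (auto simp: Phi_def)

lemma CC_le1: "CC d t \<le> 1"
proof (cases "0 \<le> t")
  case True
  have "exp (-t) * Phi (t - d) \<le> exp (-t) * 1" by (intro mult_left_mono Phi_le1) auto
  then show ?thesis using True by (simp add: CC_def aa_def)
next
  case False
  have "exp t * Phi (t - d) \<le> 1 * 1" using False by (intro mult_mono Phi_le1 Phi_nonneg) auto
  then show ?thesis using False by (simp add: CC_def aa_def)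
qed

lemma CC_nonneg: "0 \<le> CC d t"
  unfolding CC_def using aa_nonneg Phi_nonneg by simp

lemma CC_sym: "CC (-d) t = 1 - CC d (-t)"
proof -
  have e: "- t - d = - (d + t)" by simp
  have h: "Phi (d + t) + Phi (- t - d) = 1" by (subst e) (rule Phi_sym)
  have h1: "exp (-t) * Phi (d+t) + exp (-t) * Phi (-t-d) = exp (-t)"
    using h by (metis distrib_left mult_1_right)
  have h2: "exp t * Phi (d+t) + exp t * Phi (-t-d) = exp t"
    using h by (metis distrib_left mult_1_right)
  show ?thesis unfolding CC_def aa_def using h1 h2 by (cases "t > 0"; cases "t = 0") (auto simp: algebra_simps h)
qed

lemma kk_sym: "x \<noteq> 0 \<Longrightarrow> kk (-d) (-x) = kk d x"
  by (auto simp: kk_def)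

lemma kk_le1: "kk d x \<le> 1"
  by (auto simp: kk_def)

lemma CC_meas[measurable]: "(\<lambda>d. CC d t) \<in> borel_measurable borel"
  unfolding CC_def by measurable

lemma refl_fp:
  assumes RD: "real_distribution M"
    and fp: "\<And>t. emeasure M {..t} = (\<integral>\<^sup>+d. ennreal (CC d t) \<partial>M)"
    and na: "\<And>x. emeasure M {x} = 0"
  shows "emeasure (distr M borel uminus) {..t} = (\<integral>\<^sup>+d. ennreal (CC d t) \<partial>distr M borel uminus)"
proof -
  interpret real_distribution M by (rule RD)
  have intC: "integrable M (\<lambda>d. CC d s)" for s
    by (rule integrable_const_bound[where B=1]) (auto simp: CC_le1 CC_nonneg abs_le_iff intro: order.trans[OF _ zero_le_one])
  have cdfC: "cdf M s = (\<integral>d. CC d s \<partial>M)" for s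
    using fp[of s] CC_nonneg by (simp add: cdf_def2 measure_def integral_eq_nn_integral)
  have "measure M {..-t} = measure M {..<-t} + measure M {-t}"
    by (subst measure_Union[symmetric]) (auto intro!: arg_cong[where f="measure M"])
  then have m1: "measure M {..<-t} = cdf M (-t)"
    using na[of "-t"] by (simp add: cdf_def2 measure_def)
  have "emeasure (distr M borel uminus) {..t} = emeasure M {-t..}"
    by (subst emeasure_distr) (auto intro!: arg_cong[where f="emeasure M"])
  also have "\<dots> = ennreal (measure M (UNIV - {..<-t}))"
    by (simp add: emeasure_eq_measure Compl_eq_Diff_UNIV[symmetric])
  also have "\<dots> = ennreal (1 - cdf M (-t))"
    using prob_compl[of "{..<-t}"] m1 by simp
  also have "1 - cdf M (-t) = (\<integral>d. 1 - CC d (-t) \<partial>M)"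
    using intC prob_space by (simp add: cdfC)
  also have "ennreal (\<integral>d. 1 - CC d (-t) \<partial>M) = (\<integral>\<^sup>+d. ennreal (1 - CC d (-t)) \<partial>M)"
    using intC CC_le1 by (intro nn_integral_eq_integral[symmetric]) auto
  also have "\<dots> = (\<integral>\<^sup>+d. ennreal (CC (-d) t) \<partial>M)"
    by (simp add: CC_sym)
  also have "\<dots> = (\<integral>\<^sup>+d. ennreal (CC d t) \<partial>distr M borel uminus)"
    by (subst nn_integral_distr) auto
  finally show ?thesis .
qed




theorem mainTheorem6:
  fixes \<mu> :: "real measure"
  assumes "ladder_stationary \<mu>"
  shows "\<exists>\<rho> :: real \<Rightarrow> real.
           \<rho> \<in> borel_measurable borel \<and> (\<forall>d. 0 \<le> \<rho> d) \<and>
           \<mu> = density lborel (\<lambda>d. ennreal (\<rho> d)) \<and>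
           (\<forall>d < 0. \<rho> d = exp d * (\<integral>\<delta>\<in>{..d}. \<rho> \<delta> \<partial>lborel)
                          + exp (2 * d) * (\<integral>\<delta>\<in>{d..}. \<rho> \<delta> * exp (- \<delta>) \<partial>lborel)) \<and>
           (\<forall>d \<ge> 0. \<rho> d = exp (- 2 * d) * (\<integral>\<delta>\<in>{..d}. \<rho> \<delta> * exp \<delta> \<partial>lborel)
                          + exp (- d) * (\<integral>\<delta>\<in>{d..}. \<rho> \<delta> \<partial>lborel)) \<and>
           (\<forall>d. \<rho> d = \<rho> (- d))"
proof -
  note st = assms
  have P: "prob_space \<mu>" and S[measurable_cong]: "sets \<mu> = sets borel"
    using st unfolding ladder_stationary_def by auto
  interpret RD: real_distribution \<mu> by (rule real_distribution.intro[OF P]) (unfold_locales, rule S)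
  define \<rho>E where "\<rho>E x = (\<integral>\<^sup>+d. ennreal (kk d x) \<partial>\<mu>)" for x
  have kkm[measurable]: "(\<lambda>(d, x). kk d x) \<in> borel_measurable (borel \<Otimes>\<^sub>M borel)"
    unfolding kk_def by measurable
  have \<rho>Em[measurable]: "\<rho>E \<in> borel_measurable borel"
  proof -
    have "(\<lambda>(x, d). ennreal (kk d x)) \<in> borel_measurable (borel \<Otimes>\<^sub>M \<mu>)"
      using kkm by measurable
    then show ?thesis unfolding \<rho>E_def
      by (rule RD.borel_measurable_nn_integral[where f="\<lambda>x d. ennreal (kk d x)", simplified])
  qed
  have \<rho>E1: "\<rho>E x \<le> 1" for x
  proof -
    have "\<rho>E x \<le> (\<integral>\<^sup>+d. ennreal 1 \<partial>\<mu>)" unfolding \<rho>E_def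
      by (intro nn_integral_mono ennreal_leI kk_le1)
    then show ?thesis using RD.emeasure_space_1 by simp
  qed
  define \<rho> where "\<rho> x = enn2real (\<rho>E x)" for x
  have e\<rho>: "ennreal (\<rho> x) = \<rho>E x" for x
    unfolding \<rho>_def using \<rho>E1[of x] by (intro ennreal_enn2real) (simp add: order_le_less_trans)
  have \<rho>m[measurable]: "\<rho> \<in> borel_measurable borel" unfolding \<rho>_def by measurable
  have \<rho>0: "0 \<le> \<rho> x" for x unfolding \<rho>_def by simp
  have Md: "\<mu> = density lborel (\<lambda>x. ennreal (\<rho> x))"
    using dens[OF st] unfolding e\<rho> \<rho>E_def by simp
  have rdef: "ennreal (\<rho> x) = (\<integral>\<^sup>+d. ennreal (kk d x) \<partial>\<mu>)" for x
    using e\<rho>[of x] unfolding \<rho>E_def .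
  note E = eqs[OF Md \<rho>m \<rho>0 P rdef]
  define \<nu> where "\<nu> = distr \<mu> borel uminus"
  have RDn: "real_distribution \<nu>"
    unfolding \<nu>_def
    by (rule real_distribution.intro, rule prob_space.prob_space_distr[OF P], simp, unfold_locales) simp
  interpret RN: real_distribution \<nu> by (rule RDn)
  have na: "emeasure \<mu> {x} = 0" for x
    unfolding Md by (subst emeasure_density) (auto intro!: nn_integral_null_set)
  have fp\<mu>: "emeasure \<mu> {..t} = (\<integral>\<^sup>+d. ennreal (CC d t) \<partial>\<mu>)" for t
    by (rule fixed_point[OF st])
  have fp\<nu>: "emeasure \<nu> {..t} = (\<integral>\<^sup>+d. ennreal (CC d t) \<partial>\<nu>)" for t
    unfolding \<nu>_def by (rule refl_fp[OF RD.real_distribution_axioms fp\<mu> na])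
  have cdfeq: "cdf \<mu> = cdf \<nu>"
  proof (rule contraction)
    show "cdf \<mu> \<in> borel_measurable borel"
      by (rule borel_measurable_mono) (auto simp: mono_def RD.cdf_nondecreasing)
    show "cdf \<nu> \<in> borel_measurable borel"
      by (rule borel_measurable_mono) (auto simp: mono_def RN.cdf_nondecreasing)
    show "0 \<le> cdf \<mu> x \<and> cdf \<mu> x \<le> 1" for x
      using RD.cdf_nonneg RD.cdf_bounded_prob by auto
    show "0 \<le> cdf \<nu> x \<and> cdf \<nu> x \<le> 1" for x
      using RN.cdf_nonneg RN.cdf_bounded_prob by auto
    show "cdf \<mu> t = aa t + exp (- \<bar>t\<bar>) * (\<integral>l. fL l * cdf \<mu> (t - l) \<partial>lborel)" for t
      by (rule Heq[OF RD.real_distribution_axioms fp\<mu>])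
    show "cdf \<nu> t = aa t + exp (- \<bar>t\<bar>) * (\<integral>l. fL l * cdf \<nu> (t - l) \<partial>lborel)" for t
      by (rule Heq[OF RDn fp\<nu>])
  qed
  have mn: "\<mu> = \<nu>"
    by (rule cdf_unique[OF RD.real_distribution_axioms RDn cdfeq])
  have even: "\<rho> x = \<rho> (- x)" for x
  proof (cases "x = 0")
    case True then show ?thesis by simp
  next
    case False
    have "\<rho>E (- x) = (\<integral>\<^sup>+d. ennreal (kk d (- x)) \<partial>\<nu>)"
      unfolding \<rho>E_def using mn by simp
    also have "\<dots> = (\<integral>\<^sup>+d. ennreal (kk (- d) (- x)) \<partial>\<mu>)"
      unfolding \<nu>_def by (subst nn_integral_distr) (auto simp: kk_def)
    also have "\<dots> = \<rho>E x"
      unfolding \<rho>E_def using False by (simp add: kk_sym)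
    finally show ?thesis unfolding \<rho>_def by simp
  qed
  show ?thesis
    by (intro exI[of _ \<rho>] conjI \<rho>m allI \<rho>0 Md E even)
qed


end
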